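(* Let $s,t,q,N$ be integers with $0\le s<q$, $1\le t<q$, $N\ge0$, $t\nmid q$ and $\gcd(t,q)=1$. Write $q=\overline qt+\widehat q$ ($1\le\widehat q<t$), $s=\overline st+\widehat s$ ($0\le\widehat s<t$). Let $S^+(s,t,q,N)=\sum_{k=0}^N\lfloor(s+kt)/q\rfloor$, $M=\lfloor(s+Nt)/q\rfloor$, $x_M=(Mq-s)/t$ and $S=\overline q\frac{(M-1)M}2+M(N-\lceil x_M\rceil+1)$. Let $H=\{k\in\mathbb N:(\widehat s-k\widehat q)\bmod t<\widehat q\}$ (the hS-type indices), $J=H\cap\{0,\dots,t-1\}=\{j_0<j_1<\dots<j_{\widehat q-1}\}$, and for a finite set $K$ let $S_K=\sum_{k\in K}k$. Then: (a) if $j_0\ge M$, $S^+(s,t,q,N)=S$; (b.1) if $j_0<M\le j_{\widehat q-1}$, then $S^+(s,t,q,N)=S+S_K$ with $K=H\cap\{0,\dots,M-1\}$; (b.2) if $j_{\widehat q-1}<M$ and $j_0+t\ge M$, then $S^+(s,t,q,N)=S+S_J$; (b.3) if $j_{\widehat q-1}<M$ and $j_0+t<M$, set $u=\lfloor(M-1)/t\rfloor$ and $K=H\cap\{ut,\dots,M-1\}$; then $S^+(s,t,q,N)=S+uS_J+\widehat q\,t\frac{(u-1)u}2+S_K$.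
   Context: Here $r\bmod t$ denotes the representative of $r$ in $\{0,\dots,t-1\}$. *)

theory Defs
  imports Complex_Main
begin

definition qbar :: "int \<Rightarrow> int \<Rightarrow> int" where "qbar t q = q div t"
definition qhat :: "int \<Rightarrow> int \<Rightarrow> int" where "qhat t q = q mod t"
definition shat :: "int \<Rightarrow> int \<Rightarrow> int" where "shat s t = s mod t"

definition Splus :: "int \<Rightarrow> int \<Rightarrow> int \<Rightarrow> int \<Rightarrow> int" where
  "Splus s t q N = (\<Sum>k\<in>{0..N}. \<lfloor>real_of_int (s + k * t) / real_of_int q\<rfloor>)"

definition Mval :: "int \<Rightarrow> int \<Rightarrow> int \<Rightarrow> int \<Rightarrow> int" where
  "Mval s t q N = \<lfloor>real_of_int (s + N * t) / real_of_int q\<rfloor>"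

definition xM :: "int \<Rightarrow> int \<Rightarrow> int \<Rightarrow> int \<Rightarrow> real" where
  "xM s t q N = real_of_int (Mval s t q N * q - s) / real_of_int t"

definition Sbase :: "int \<Rightarrow> int \<Rightarrow> int \<Rightarrow> int \<Rightarrow> real" where
  "Sbase s t q N = (let M = Mval s t q N in
     real_of_int (qbar t q) * (real_of_int ((M - 1) * M) / 2)
     + real_of_int (M * (N - \<lceil>xM s t q N\<rceil> + 1)))"

definition Hset :: "int \<Rightarrow> int \<Rightarrow> int \<Rightarrow> int set" where
  "Hset s t q = {k. 0 \<le> k \<and> (shat s t - k * qhat t q) mod t < qhat t q}"

definition Jset :: "int \<Rightarrow> int \<Rightarrow> int \<Rightarrow> int set" where
  "Jset s t q = Hset s t q \<inter> {0..t-1}"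

end

theory Submission
  imports Defs
begin

lemma divstep:
  fixes a t qh :: int
  assumes "0 < t" "0 \<le> qh" "qh < t"
  shows "(a - qh) div t = a div t - (if a mod t < qh then 1 else 0)"
proof (cases "a mod t < qh")
  case True
  have h1: "a - qh = t * (a div t - 1) + (a mod t - qh + t)"
    by (simp add: algebra_simps)
  moreover have h2: "0 \<le> a mod t - qh + t" "a mod t - qh + t < t"
    using True assms pos_mod_sign[of t a] pos_mod_bound[of t a] by linarith+
  show ?thesis using True int_div_pos_eq[OF h1 h2] by simp
next
  case False
  have h1: "a - qh = t * (a div t) + (a mod t - qh)"
    by (simp add: algebra_simps)
  moreover have h2: "0 \<le> a mod t - qh" "a mod t - qh < t"
    using False assms pos_mod_bound[of t a] by linarith+
  show ?thesis using False int_div_pos_eq[OF h1 h2] by simp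
qed

lemma Cstep:
  fixes s t q m :: int
  assumes "0 < t" "\<not> t dvd q" "0 \<le> m"
  shows "- ((s - (m+1)*q) div t) = - ((s - m*q) div t) + qbar t q + (if m \<in> Hset s t q then 1 else 0)"
proof -
  have q: "q = qbar t q * t + qhat t q" unfolding qbar_def qhat_def by simp
  have qh: "0 \<le> qhat t q" "qhat t q < t" unfolding qhat_def using assms by auto
  have e: "s - (m+1)*q = (s - m*q - qhat t q) + (- qbar t q) * t"
    using q by (simp add: algebra_simps)
  have "(s - (m+1)*q) div t = (s - m*q - qhat t q) div t - qbar t q"
    unfolding e using assms by (simp only: div_mult_self1)
  also have "\<dots> = (s - m*q) div t - (if (s - m*q) mod t < qhat t q then 1 else 0) - qbar t q"
    using divstep[OF assms(1) qh] by simp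
  finally have 1: "(s - (m+1)*q) div t = (s - m*q) div t - (if (s - m*q) mod t < qhat t q then 1 else 0) - qbar t q" .
  have "(s - m*q) mod t = (shat s t - m * qhat t q) mod t"
    unfolding shat_def qhat_def by (metis mod_diff_cong mod_mod_trivial mod_mult_right_eq)
  then have "((s - m*q) mod t < qhat t q) = (m \<in> Hset s t q)"
    unfolding Hset_def using assms by simp
  then show ?thesis using 1 by simp
qed

lemma main_int:
  fixes s t q N :: int
  assumes "0 \<le> s" "s < q" "1 \<le> t" "t < q" "\<not> t dvd q" "0 \<le> N"
  shows "(\<Sum>k\<in>{0..N}. (s+k*t) div q) = qbar t q * ((((s+N*t) div q - 1) * ((s+N*t) div q)) div 2)
     + ((s+N*t) div q) * (N - (- ((s - ((s+N*t) div q)*q) div t)) + 1)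
     + \<Sum>(Hset s t q \<inter> {0..(s+N*t) div q - 1})"
  using assms(6)
proof (induction N rule: int_ge_induct)
  case base
  have "s div q = 0" using assms by simp
  then show ?case by simp
next
  case (step N)
  define M where "M = (s+N*t) div q"
  define M' where "M' = (s+(N+1)*t) div q"
  define H where "H = Hset s t q"
  have qpos: "0 < q" using assms by simp
  have b1: "q*M \<le> s+N*t" "s+N*t < q*(M+1)"
  proof -
    have "s+N*t = q*M + (s+N*t) mod q" unfolding M_def by simp
    then show "q*M \<le> s+N*t" "s+N*t < q*(M+1)" using qpos pos_mod_bound[of q "s+N*t"] pos_mod_sign[of q "s+N*t"]
      unfolding distrib_left by linarith+
  qed
  have b2: "q*M' \<le> s+(N+1)*t" "s+(N+1)*t < q*(M'+1)"
  proof -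
    have "s+(N+1)*t = q*M' + (s+(N+1)*t) mod q" unfolding M'_def by simp
    then show "q*M' \<le> s+(N+1)*t" "s+(N+1)*t < q*(M'+1)" using qpos pos_mod_bound[of q "s+(N+1)*t"] pos_mod_sign[of q "s+(N+1)*t"]
      unfolding distrib_left by linarith+
  qed
  have "q*M < q*(M'+1)" using b1 b2 assms by (simp add: algebra_simps)
  then have c1: "M \<le> M'" using qpos by (simp add: mult_less_cancel_left_pos)
  have "q*M' < q*(M+2)" using b1 b2 assms by (simp add: algebra_simps)
  then have c2: "M' \<le> M+1" using qpos by (simp add: mult_less_cancel_left_pos)
  have "0 \<le> N*t" using assms step by simp
  then have M0: "0 \<le> M" unfolding M_def using assms qpos by (simp add: pos_imp_zdiv_nonneg_iff)
  have split: "{0..N+1} = insert (N+1) {0..N}" using step by auto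
  have L: "(\<Sum>k\<in>{0..N+1}. (s+k*t) div q) = (\<Sum>k\<in>{0..N}. (s+k*t) div q) + M'"
    unfolding split M'_def by simp
  have IH: "(\<Sum>k\<in>{0..N}. (s+k*t) div q) = qbar t q * (((M - 1) * M) div 2)
     + M * (N - (- ((s - M*q) div t)) + 1) + \<Sum>(H \<inter> {0..M - 1})"
    using step.IH unfolding M_def H_def .
  show ?case
  proof (cases "M' = M")
    case True
    show ?thesis unfolding M'_def[symmetric] H_def[symmetric] L IH True
      by (simp add: algebra_simps)
  next
    case False
    then have MM: "M' = M + 1" using c1 c2 by simp
    have d: "((M+1-1)*(M+1)) div 2 = ((M-1)*M) div 2 + M"
    proof -
      have "(M+1-1)*(M+1) = (M-1)*M + M*2" by (simp add: algebra_simps)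
      then show ?thesis by simp
    qed
    have hs: "\<Sum>(H \<inter> {0..M+1-1}) = \<Sum>(H \<inter> {0..M - 1}) + (if M \<in> H then M else 0)"
    proof -
      have "H \<inter> {0..M+1-1} = (if M \<in> H then insert M (H \<inter> {0..M-1}) else H \<inter> {0..M-1})"
        using M0 by (auto simp: order_le_less)
      then show ?thesis by simp
    qed
    have cs: "- ((s - (M+1)*q) div t) = - ((s - M*q) div t) + qbar t q + (if M \<in> H then 1 else 0)"
      unfolding H_def using Cstep[of t q M s] assms M0 by simp
    have r: "s - (M+1)*q = t * (-(N+1)) + (s - (M+1)*q + (N+1)*t)" by (simp add: algebra_simps)
    have r1: "0 \<le> s - (M+1)*q + (N+1)*t" "s - (M+1)*q + (N+1)*t < t"
      using b1 b2 MM by (simp_all add: algebra_simps)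
    have cN: "(s - (M+1)*q) div t = -(N+1)" using int_div_pos_eq[OF r r1] .
    have cM: "(s - M*q) div t = qbar t q + (if M \<in> H then 1 else 0) - (N+1)" using cs cN by simp
    show ?thesis unfolding M'_def[symmetric] H_def[symmetric] L IH MM d hs cM cN
      by (cases "M \<in> H") (simp_all add: algebra_simps)
  qed
qed

lemma Hshift:
  fixes s t q k a :: int
  assumes "0 \<le> k" "0 \<le> a" "0 \<le> t"
  shows "(k + a*t \<in> Hset s t q) = (k \<in> Hset s t q)"
proof -
  have e: "shat s t - (k + a*t) * qhat t q = (shat s t - k * qhat t q) + (- (a * qhat t q)) * t"
    by (simp add: algebra_simps)
  have "(shat s t - (k + a*t) * qhat t q) mod t = (shat s t - k * qhat t q) mod t"
    unfolding e by (rule mod_mult_self1)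
  moreover have "0 \<le> a*t" using assms by simp
  ultimately show ?thesis unfolding Hset_def using assms by simp
qed

lemma cardJ:
  fixes s t q :: int
  assumes "1 \<le> t" "\<not> t dvd q" "gcd t q = 1"
  shows "int (card (Jset s t q)) = qhat t q"
proof -
  define qh where "qh = qhat t q"
  define f where "f k = (shat s t - k * qh) mod t" for k
  define A where "A = {0..t-1}"
  have qh: "0 < qh" "qh < t" unfolding qh_def qhat_def using assms pos_mod_sign[of t q]
    by (auto simp: order_le_less dvd_eq_mod_eq_0)
  have cop: "coprime t qh"
  proof -
    have "gcd t qh = gcd t q" unfolding qh_def qhat_def
      by (metis gcd.commute gcd_red_int)
    then show ?thesis using assms by (simp add: coprime_iff_gcd_eq_1)
  qed
  have inj: "inj_on f A"
  proof (rule inj_onI)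
    fix a b assume ab: "a \<in> A" "b \<in> A" "f a = f b"
    then have "t dvd (shat s t - a * qh) - (shat s t - b * qh)"
      unfolding f_def by (simp add: mod_eq_dvd_iff)
    then have "t dvd (b - a) * qh" by (simp add: algebra_simps)
    then have d: "t dvd (b - a)" using cop by (simp add: coprime_dvd_mult_left_iff)
    show "a = b"
    proof (rule ccontr)
      assume "a \<noteq> b"
      then have "\<bar>t\<bar> \<le> \<bar>b - a\<bar>" using d dvd_imp_le_int by simp
      then show False using ab(1,2) assms unfolding A_def by auto
    qed
  qed
  have fA: "f ` A = A"
  proof (rule endo_inj_surj)
    show "finite A" unfolding A_def by simp
    show "f ` A \<subseteq> A" unfolding A_def f_def using assms by auto
    show "inj_on f A" by (rule inj)
  qed
  have J: "Jset s t q = A \<inter> f -` {0..qh-1}"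
    unfolding Jset_def Hset_def A_def f_def qh_def using assms by auto
  have "card (Jset s t q) = card (f ` (A \<inter> f -` {0..qh-1}))"
    unfolding J by (rule card_image[symmetric]) (rule inj_on_subset[OF inj], auto)
  also have "f ` (A \<inter> f -` {0..qh-1}) = {0..qh-1}"
  proof (rule set_eqI, rule iffI)
    fix x assume "x \<in> f ` (A \<inter> f -` {0..qh-1})" then show "x \<in> {0..qh-1}" by auto
  next
    fix x assume x: "x \<in> {0..qh-1}"
    then have "x \<in> f ` A" using fA qh unfolding A_def by auto
    then obtain y where "y \<in> A" "x = f y" by auto
    then show "x \<in> f ` (A \<inter> f -` {0..qh-1})" using x by auto
  qed
  finally show ?thesis using qh unfolding qh_def by simp
qed

lemma blocks:
  fixes s t q :: int and u :: nat
  assumes "1 \<le> t" "\<not> t dvd q" "gcd t q = 1"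
  shows "2 * \<Sum>(Hset s t q \<inter> {0..int u*t-1}) = 2 * int u * \<Sum>(Jset s t q) + qhat t q * t * (int u * (int u - 1))"
proof (induction u)
  case 0
  then show ?case using assms by simp
next
  case (Suc u)
  define H where "H = Hset s t q"
  define J where "J = Jset s t q"
  have cJ: "int (card J) = qhat t q" unfolding J_def using cardJ assms by simp
  have finJ: "finite J" unfolding J_def Jset_def by simp
  have seteq: "H \<inter> {0..int (Suc u)*t-1} = (H \<inter> {0..int u*t-1}) \<union> (\<lambda>k. k + int u*t) ` J"
  proof (rule set_eqI, rule iffI)
    fix x assume x: "x \<in> H \<inter> {0..int (Suc u)*t-1}"
    show "x \<in> (H \<inter> {0..int u*t-1}) \<union> (\<lambda>k. k + int u*t) ` J"
    proof (cases "x \<le> int u * t - 1")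
      case True then show ?thesis using x by auto
    next
      case False
      have "x - int u * t \<in> H" using Hshift[of "x - int u*t" "int u" t s q] x False assms
        unfolding H_def by simp
      moreover have "x - int u * t \<le> t - 1" using x by (simp add: algebra_simps)
      ultimately have "x - int u*t \<in> J" using False unfolding J_def Jset_def H_def by simp
      then have "x \<in> (\<lambda>k. k + int u*t) ` J" by (rule rev_image_eqI) simp
      then show ?thesis by simp
    qed
  next
    fix x assume x: "x \<in> (H \<inter> {0..int u*t-1}) \<union> (\<lambda>k. k + int u*t) ` J"
    show "x \<in> H \<inter> {0..int (Suc u)*t-1}"
    proof (cases "x \<in> H \<inter> {0..int u*t-1}")
      case True
      have "int u * t \<le> int (Suc u) * t" using assms by (simp add: algebra_simps)
      then show ?thesis using True by auto
    next
      case False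
      then obtain j where j: "j \<in> J" "x = j + int u * t" using x by auto
      have "j + int u * t \<in> H" using Hshift[of j "int u" t s q] j assms
        unfolding H_def J_def Jset_def by simp
      moreover have "0 \<le> j" "j \<le> t - 1" using j unfolding J_def Jset_def by auto
      moreover have "0 \<le> int u * t" using assms by simp
      ultimately show ?thesis using j by (simp add: algebra_simps)
    qed
  qed
  have disj: "(H \<inter> {0..int u*t-1}) \<inter> (\<lambda>k. k + int u*t) ` J = {}"
    unfolding J_def Jset_def by auto
  have "\<Sum>(H \<inter> {0..int (Suc u)*t-1}) = \<Sum>(H \<inter> {0..int u*t-1}) + \<Sum>((\<lambda>k. k + int u*t) ` J)"
    unfolding seteq by (rule sum.union_disjoint) (use finJ disj in auto)
  also have "\<Sum>((\<lambda>k. k + int u*t) ` J) = (\<Sum>k\<in>J. k + int u*t)"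
    by (subst sum.reindex) (auto simp: inj_on_def)
  also have "\<dots> = \<Sum>J + int (card J) * (int u * t)"
    by (simp add: sum.distrib)
  finally have "\<Sum>(H \<inter> {0..int (Suc u)*t-1}) = \<Sum>(H \<inter> {0..int u*t-1}) + \<Sum>J + qhat t q * (int u * t)"
    using cJ by simp
  then show ?case using Suc.IH unfolding H_def[symmetric] J_def[symmetric]
    by (simp add: algebra_simps)
qed

lemma arith_aux:
  fixes A C D u j qh t :: int
  assumes "2*A = 2*u*j + qh*t*(u*(u-1))" "D = A + C"
  shows "real_of_int D = real_of_int (u*j) + real_of_int (qh*t) * (real_of_int ((u-1)*u)/2) + real_of_int C"
proof -
  have "real_of_int (2*A) = real_of_int (2*u*j + qh*t*(u*(u-1)))" using assms(1) by simp
  then have "2 * real_of_int A = 2*real_of_int (u*j) + real_of_int (qh*t) * real_of_int ((u-1)*u)"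
    by (simp add: algebra_simps)
  then show ?thesis using assms(2) by (simp add: field_simps)
qed

theorem theorem9:
  fixes s t q N :: int
  assumes "0 \<le> s" "s < q" "1 \<le> t" "t < q" "0 \<le> N"
    and "\<not> t dvd q" and "gcd t q = 1"
  shows
   "(let M = Mval s t q N; H = Hset s t q; J = Jset s t q;
         j0 = Min J; jl = Max J; S = Sbase s t q N;
         Sp = real_of_int (Splus s t q N) in
     (j0 \<ge> M \<longrightarrow> Sp = S) \<and>
     (j0 < M \<and> M \<le> jl \<longrightarrow>
        Sp = S + real_of_int (\<Sum> (H \<inter> {0..M-1}))) \<and>
     (jl < M \<and> j0 + t \<ge> M \<longrightarrow>
        Sp = S + real_of_int (\<Sum> J)) \<and>
     (jl < M \<and> j0 + t < M \<longrightarrow>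
        (let u = (M - 1) div t in
         Sp = S + real_of_int (u * \<Sum> J)
              + real_of_int (qhat t q * t) * (real_of_int ((u - 1) * u) / 2)
              + real_of_int (\<Sum> (H \<inter> {u*t..M-1})))))"
proof -
  define M where "M = Mval s t q N"
  define H where "H = Hset s t q"
  define J where "J = Jset s t q"
  have Mv: "M = (s+N*t) div q" unfolding M_def Mval_def by (rule floor_divide_of_int_eq)
  have Sp: "Splus s t q N = (\<Sum>k\<in>{0..N}. (s+k*t) div q)"
    unfolding Splus_def by (simp only: floor_divide_of_int_eq)
  have cx: "ceiling (xM s t q N) = -((s - M*q) div t)"
  proof -
    have "- xM s t q N = real_of_int (s - M*q) / real_of_int t"
      unfolding xM_def M_def[symmetric] by (simp add: minus_divide_left)
    then show ?thesis unfolding ceiling_def by (simp only: floor_divide_of_int_eq)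
  qed
  have ev: "2 dvd ((M-1)*M)" by auto
  have Sb: "Sbase s t q N = real_of_int (qbar t q * (((M-1)*M) div 2) + M*(N - (-((s - M*q) div t)) + 1))"
    unfolding Sbase_def Let_def M_def[symmetric] cx using real_of_int_div[OF ev] by simp
  have key: "real_of_int (Splus s t q N) = Sbase s t q N + real_of_int (\<Sum>(H \<inter> {0..M-1}))"
    unfolding Sp Sb H_def Mv using main_int[of s q t N] assms by simp
  have cJ: "int (card J) = qhat t q" unfolding J_def using cardJ assms by simp
  have qh: "0 < qhat t q" unfolding qhat_def using assms pos_mod_sign[of t q]
    by (auto simp: order_le_less dvd_eq_mod_eq_0)
  have finJ: "finite J" unfolding J_def Jset_def by simp
  have neJ: "J \<noteq> {}" using cJ qh by auto
  have JH: "J = H \<inter> {0..t-1}" unfolding J_def H_def Jset_def ..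
  have j0: "Min J \<in> J" "\<And>x. x \<in> J \<Longrightarrow> Min J \<le> x" using finJ neJ by auto
  have jl: "Max J \<in> J" "\<And>x. x \<in> J \<Longrightarrow> x \<le> Max J" using finJ neJ by auto
  show ?thesis unfolding Let_def M_def[symmetric] H_def[symmetric] J_def[symmetric]
  proof (intro conjI impI)
    assume a: "M \<le> Min J"
    have "H \<inter> {0..M-1} = {}"
    proof (rule ccontr)
      assume "H \<inter> {0..M-1} \<noteq> {}"
      then obtain x where x: "x \<in> H" "0 \<le> x" "x \<le> M-1" by auto
      have "Min J \<le> t - 1" using j0(1) JH by auto
      then have "x \<in> J" using x a JH by auto
      then show False using j0(2) x a by fastforce
    qed
    then show "real_of_int (Splus s t q N) = Sbase s t q N" using key by simp
  next
    assume "Min J < M \<and> M \<le> Max J"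
    then show "real_of_int (Splus s t q N) = Sbase s t q N + real_of_int (\<Sum>(H \<inter> {0..M-1}))"
      using key by simp
  next
    assume a: "Max J < M \<and> M \<le> Min J + t"
    have "H \<inter> {0..M-1} = J"
    proof (rule set_eqI, rule iffI)
      fix x assume x: "x \<in> H \<inter> {0..M-1}"
      show "x \<in> J"
      proof (cases "x \<le> t - 1")
        case True then show ?thesis using x JH by auto
      next
        case False
        have "x - t + 1*t \<in> H" using x by simp
        then have "x - t \<in> H" using Hshift[of "x - t" 1 t s q] False assms unfolding H_def by simp
        have "Min J \<le> t - 1" using j0(1) JH by auto
        then have "x - t \<in> J" using \<open>x - t \<in> H\<close> False x JH a by auto
        then show ?thesis using j0(2)[of "x-t"] x a by auto
      qed
    next
      fix x assume "x \<in> J"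
      then have "x \<le> Max J" "x \<in> H" "0 \<le> x" using jl(2)[of x] JH by auto
      then show "x \<in> H \<inter> {0..M-1}" using a by auto
    qed
    then show "real_of_int (Splus s t q N) = Sbase s t q N + real_of_int (\<Sum>J)"
      using key by simp
  next
    assume a: "Max J < M \<and> Min J + t < M"
    define u where "u = (M - 1) div t"
    have "0 \<le> Min J" using j0(1) JH by auto
    then have u0: "0 \<le> u" unfolding u_def using a assms by (simp add: pos_imp_zdiv_nonneg_iff)
    have "M - 1 = t * u + (M-1) mod t" unfolding u_def by simp
    moreover have "0 \<le> (M-1) mod t" using assms by simp
    ultimately have ut: "u*t \<le> M - 1" by (simp add: algebra_simps)
    have bl: "2 * \<Sum>(H \<inter> {0..u*t-1}) = 2 * u * \<Sum>J + qhat t q * t * (u * (u - 1))"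
      using blocks[of t q s "nat u"] assms u0 unfolding H_def J_def by simp
    have spl: "H \<inter> {0..M-1} = (H \<inter> {0..u*t-1}) \<union> (H \<inter> {u*t..M-1})"
      using ut u0 assms by (auto simp: H_def Hset_def)
    have "\<Sum>(H \<inter> {0..M-1}) = \<Sum>(H \<inter> {0..u*t-1}) + \<Sum>(H \<inter> {u*t..M-1})"
      unfolding spl by (rule sum.union_disjoint) auto
    then have "real_of_int (\<Sum>(H \<inter> {0..M-1})) = real_of_int (u * \<Sum>J)
              + real_of_int (qhat t q * t) * (real_of_int ((u - 1) * u) / 2)
              + real_of_int (\<Sum>(H \<inter> {u*t..M-1}))"
      by (rule arith_aux[OF bl])
    then show "real_of_int (Splus s t q N) = Sbase s t q N + real_of_int ((M - 1) div t * \<Sum>J)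
              + real_of_int (qhat t q * t) * (real_of_int (((M - 1) div t - 1) * ((M - 1) div t)) / 2)
              + real_of_int (\<Sum>(H \<inter> {(M - 1) div t * t..M-1}))"
      using key unfolding u_def by simp
  qed
qed

end
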